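(* Let $\sigma^2>0$, let $\phi^m:\mathbb{R}^d\to\mathbb{R}^m$ and $\phi^r:\mathbb{R}^d\to\mathbb{R}^r$ be feature maps, let $\mathbf{x}_1,\ldots,\mathbf{x}_N\in\mathbb{R}^d$ be training points with $N\ge r$ such that $\Phi^{r\top}_{\mathbf{x}}\Phi^r_{\mathbf{x}}$ is invertible, and let $\mathbf{x}'_1,\ldots,\mathbf{x}'_{N'}\in\mathbb{R}^d$ be test points. Here $\Phi^r_{\mathbf{u}}$ (resp. $\Phi^m_{\mathbf{u}}$) denotes the matrix whose $i$-th row is $\phi^r(\mathbf{u}_i)^\top$ (resp. $\phi^m(\mathbf{u}_i)^\top$). Let $A:=\Phi^{m\top}_{\mathbf{x}}\Phi^r_{\mathbf{x}}(\Phi^{r\top}_{\mathbf{x}}\Phi^r_{\mathbf{x}})^{-1}\in\mathbb{R}^{m\times r}$ (the minimizer of $\sum_{i=1}^N\|\phi^m(\mathbf{x}_i)-A\phi^r(\mathbf{x}_i)\|_2^2$), let $B:=\begin{pmatrix}A\\ I_r\end{pmatrix}\in\mathbb{R}^{(m+r)\times r}$ and $\phi^B(x):=B\phi^r(x)$. Define $k^B_{\mathbf{u},\mathbf{v}}:=\Phi^r_{\mathbf{u}}B^\top B\Phi^{r\top}_{\mathbf{v}}$, $k^r_{\mathbf{u},\mathbf{v}}:=\Phi^r_{\mathbf{u}}\Phi^{r\top}_{\mathbf{v}}$, and $$S^B_{\mathbf{x}',\mathbf{x}'}:=k^B_{\mathbf{x}',\mathbf{x}'}-k^B_{\mathbf{x}',\mathbf{x}}(k^B_{\mathbf{x},\mathbf{x}}+\sigma^2I_N)^{-1}k^B_{\mathbf{x},\mathbf{x}'},\qquad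 S^{\mathrm{BLL}}_{\mathbf{x}',\mathbf{x}'}:=k^r_{\mathbf{x}',\mathbf{x}'}-k^r_{\mathbf{x}',\mathbf{x}}(k^r_{\mathbf{x},\mathbf{x}}+\sigma^2I_N)^{-1}k^r_{\mathbf{x},\mathbf{x}'}.$$ Then $S^B_{\mathbf{x}',\mathbf{x}'}\succeq S^{\mathrm{BLL}}_{\mathbf{x}',\mathbf{x}'}$ in the Loewner (positive semidefinite) order. The same holds when $\phi^B$ is replaced by the equivalent features $\phi^L(x):=L^\top\phi^r(x)$, where $LL^\top=B^\top B$ is the Cholesky decomposition.
   Context: In the motivating application, $\phi^r$ are the last-layer (Bayesian last layer) features of a trained network and $\phi^m$ are the gradients of the network output with respect to all non-last-layer parameters; $S^{\mathrm{BLL}}$ is the predictive covariance of a standard Bayesian last layer and $S^B$ that of the approximate NTK features. *)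

theory Defs
  imports "HOL-Analysis.Analysis"
begin

definition feature_matrix :: "('a \<Rightarrow> real^'k) \<Rightarrow> ('n::finite \<Rightarrow> 'a) \<Rightarrow> real^'k^'n" where
  "feature_matrix \<phi> u = (\<chi> i. \<phi> (u i))"

definition ls_matrix :: "real^'m^'n \<Rightarrow> real^'r^'n \<Rightarrow> real^'r^'m" where
  "ls_matrix Pm Pr = transpose Pm ** Pr ** matrix_inv (transpose Pr ** Pr)"

definition stack_identity :: "real^'r^'m \<Rightarrow> real^'r^('m + 'r)" where
  "stack_identity A = (\<chi> i. case i of Inl a \<Rightarrow> A $ a | Inr b \<Rightarrow> (mat 1 :: real^'r^'r) $ b)"

definition post_cov :: "real \<Rightarrow> real^'f^'n \<Rightarrow> real^'f^'t \<Rightarrow> real^'t^'t" where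
  "post_cov s2 Px Pt =
     Pt ** transpose Pt
     - Pt ** transpose Px ** matrix_inv (Px ** transpose Px + s2 *\<^sub>R mat 1) ** Px ** transpose Pt"

definition psd :: "real^'n^'n \<Rightarrow> bool" where
  "psd M \<longleftrightarrow> transpose M = M \<and> (\<forall>v. 0 \<le> v \<bullet> (M *v v))"

definition loewner_ge :: "real^'n^'n \<Rightarrow> real^'n^'n \<Rightarrow> bool" where
  "loewner_ge S T \<longleftrightarrow> psd (S - T)"

end

theory Submission
  imports Defs
begin

lemma transpose_diff: "transpose (A - B) = transpose A - (transpose B :: real^'a^'b)"
  by (simp add: transpose_def vec_eq_iff)

lemma inner_mv: "(x::real^'m) \<bullet> (A *v y) = (transpose A *v x) \<bullet> y"
  by (subst transpose_matrix_vector) (rule dot_lmul_matrix[symmetric])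

lemma smat_mv: "((s::real) *\<^sub>R mat 1) *v (w::real^'n) = s *\<^sub>R w"
  by (simp add: vec_eq_iff matrix_vector_mult_def mat_def if_distrib if_distribR cong: if_cong)

lemma matrix_inv_props:
  assumes "invertible (A::real^'n^'n)"
  shows "A ** matrix_inv A = mat 1" "matrix_inv A ** A = mat 1"
proof -
  have "\<exists>A'. A ** A' = mat 1 \<and> A' ** A = mat 1" using assms invertible_def by blast
  then have "A ** matrix_inv A = mat 1 \<and> matrix_inv A ** A = mat 1"
    unfolding matrix_inv_def by (rule someI_ex)
  then show "A ** matrix_inv A = mat 1" "matrix_inv A ** A = mat 1" by auto
qed

lemma R_quad:
  fixes Fx :: "real^'k^'n"
  shows "w \<bullet> ((Fx ** transpose Fx + s *\<^sub>R mat 1) *v w) = (transpose Fx *v w) \<bullet> (transpose Fx *v w) + s * (w \<bullet> w)"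
  by (simp add: matrix_vector_mult_add_rdistrib inner_add_right smat_mv
      flip: matrix_vector_mul_assoc) (simp add: inner_mv)

lemma R_sym:
  fixes Fx :: "real^'k^'n"
  shows "transpose (Fx ** transpose Fx + s *\<^sub>R mat 1) = Fx ** transpose Fx + s *\<^sub>R mat 1"
  by (simp add: transpose_def vec_eq_iff matrix_matrix_mult_def mat_def mult.commute)

lemma R_inv:
  fixes Fx :: "real^'k^'n"
  assumes "s > 0"
  shows "invertible (Fx ** transpose Fx + s *\<^sub>R mat 1)"
proof -
  let ?R = "Fx ** transpose Fx + s *\<^sub>R mat 1"
  have "\<forall>x. ?R *v x = 0 \<longrightarrow> x = 0"
  proof (intro allI impI)
    fix x assume "?R *v x = 0"
    then have "x \<bullet> (?R *v x) = 0" by simp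
    then have "(transpose Fx *v x) \<bullet> (transpose Fx *v x) + s * (x \<bullet> x) = 0" by (simp add: R_quad)
    moreover have "0 \<le> (transpose Fx *v x) \<bullet> (transpose Fx *v x)" by simp
    moreover have "0 \<le> x \<bullet> x" by simp
    moreover have "0 \<le> s * (x \<bullet> x)" using assms by simp
    ultimately have "s * (x \<bullet> x) = 0" by linarith
    then show "x = 0" using assms by simp
  qed
  then show ?thesis
    using matrix_left_invertible_ker invertible_left_inverse by blast
qed

lemma quad_identity:
  fixes Fx :: "real^'k^'n" and Ft :: "real^'k^'t" and v :: "real^'t" and w :: "real^'n"
  assumes "s > 0"
  defines "R \<equiv> Fx ** transpose Fx + s *\<^sub>R mat 1"
  defines "w0 \<equiv> matrix_inv R *v (Fx *v (transpose Ft *v v))"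
  shows "(transpose Ft *v v - transpose Fx *v w) \<bullet> (transpose Ft *v v - transpose Fx *v w) + s * (w \<bullet> w)
         = v \<bullet> (post_cov s Fx Ft *v v) + (w - w0) \<bullet> (R *v (w - w0))"
proof -
  define N where "N = matrix_inv R"
  define a where "a = transpose Ft *v v"
  define b where "b = Fx *v a"
  have inv: "invertible R" unfolding R_def using assms(1) by (rule R_inv)
  have RN: "R ** N = mat 1" unfolding N_def using matrix_inv_props[OF inv] by simp
  have Rw0: "R *v w0 = b" unfolding w0_def N_def[symmetric] a_def[symmetric] b_def[symmetric]
    by (simp add: matrix_vector_mul_assoc RN)
  have Rsym: "transpose R = R" unfolding R_def by (rule R_sym)
  have S: "v \<bullet> (post_cov s Fx Ft *v v) = a \<bullet> a - b \<bullet> (N *v b)"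
  proof -
    have e: "post_cov s Fx Ft *v v = Ft *v a - Ft *v (transpose Fx *v (N *v b))"
      unfolding post_cov_def R_def[symmetric] N_def[symmetric] a_def b_def
      by (simp add: matrix_vector_mult_diff_rdistrib
        del: transpose_matrix_vector vector_transpose_matrix flip: matrix_vector_mul_assoc)
    have e1: "v \<bullet> (Ft *v a) = a \<bullet> a" unfolding inner_mv a_def ..
    have e2: "v \<bullet> (Ft *v (transpose Fx *v (N *v b))) = b \<bullet> (N *v b)"
      unfolding inner_mv a_def[symmetric] transpose_transpose b_def ..
    show ?thesis unfolding e inner_diff_right e1 e2 ..
  qed
  have c1: "w0 \<bullet> (R *v w) = b \<bullet> w" using Rw0 Rsym by (simp add: inner_mv)
  have c2: "w0 \<bullet> (R *v w0) = b \<bullet> (N *v b)"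
    using Rw0 unfolding w0_def N_def[symmetric] a_def[symmetric] b_def[symmetric]
    by (simp add: inner_commute)
  have q: "w \<bullet> (R *v w) = (transpose Fx *v w) \<bullet> (transpose Fx *v w) + s * (w \<bullet> w)"
    unfolding R_def by (rule R_quad)
  have d: "(transpose Fx *v w) \<bullet> a = w \<bullet> b" unfolding b_def by (simp add: inner_mv)
  have "(w - w0) \<bullet> (R *v (w - w0)) = w \<bullet> (R *v w) - 2 * (w \<bullet> b) + b \<bullet> (N *v b)"
    using c1 c2 Rw0
    by (simp add: matrix_vector_mult_diff_distrib inner_diff_left inner_diff_right inner_commute)
  then show ?thesis
    unfolding S a_def[symmetric] using q d
    by (simp add: inner_diff_left inner_diff_right inner_commute algebra_simps)
qed

lemma post_cov_sym:
  fixes Fx :: "real^'k^'n" and Ft :: "real^'k^'t"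
  assumes "s > 0"
  shows "transpose (post_cov s Fx Ft) = post_cov s Fx Ft"
proof -
  define R where "R = Fx ** transpose Fx + s *\<^sub>R mat 1"
  define N where "N = matrix_inv R"
  have inv: "invertible R" unfolding R_def using assms(1) by (rule R_inv)
  have RN: "R ** N = mat 1" and NR: "N ** R = mat 1"
    unfolding N_def using matrix_inv_props[OF inv] by simp_all
  have Rsym: "transpose R = R" unfolding R_def by (rule R_sym)
  have "transpose N ** R = mat 1"
    by (metis RN Rsym matrix_transpose_mul transpose_mat)
  then have Nsym: "transpose N = N"
    by (metis RN matrix_mul_assoc matrix_mul_lid matrix_mul_rid)
  show ?thesis
    unfolding post_cov_def R_def[symmetric] N_def[symmetric]
    by (simp add: transpose_diff matrix_transpose_mul matrix_mul_assoc Nsym)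
qed

lemma post_cov_le:
  fixes Fx :: "real^'k^'n" and Ft :: "real^'k^'t"
  assumes "s > 0"
  shows "v \<bullet> (post_cov s Fx Ft *v v) \<le> (transpose Ft *v v - transpose Fx *v w) \<bullet> (transpose Ft *v v - transpose Fx *v w) + s * (w \<bullet> w)"
proof -
  let ?R = "Fx ** transpose Fx + s *\<^sub>R mat 1"
  let ?u = "w - matrix_inv ?R *v (Fx *v (transpose Ft *v v))"
  have "?u \<bullet> (?R *v ?u) \<ge> 0"
    unfolding R_quad using assms by simp
  then show ?thesis unfolding quad_identity[OF assms] by simp
qed

lemma post_cov_eq:
  fixes Fx :: "real^'k^'n" and Ft :: "real^'k^'t"
  assumes "s > 0"
  shows "\<exists>w. v \<bullet> (post_cov s Fx Ft *v v) = (transpose Ft *v v - transpose Fx *v w) \<bullet> (transpose Ft *v v - transpose Fx *v w) + s * (w \<bullet> w)"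
  by (rule exI[of _ "matrix_inv (Fx ** transpose Fx + s *\<^sub>R mat 1) *v (Fx *v (transpose Ft *v v))"])
     (simp add: quad_identity[OF assms] del: transpose_matrix_vector vector_transpose_matrix)

lemma main_gen:
  fixes P :: "real^'r^'n" and Q :: "real^'r^'t" and H :: "real^'k^'r"
  assumes "s > 0" and M: "\<And>u. u \<bullet> u \<le> u \<bullet> ((H ** transpose H) *v u)"
  shows "loewner_ge (post_cov s (P ** H) (Q ** H)) (post_cov s P Q)"
  unfolding loewner_ge_def psd_def
proof (intro conjI allI)
  show "transpose (post_cov s (P ** H) (Q ** H) - post_cov s P Q) = post_cov s (P ** H) (Q ** H) - post_cov s P Q"
    by (simp add: transpose_diff post_cov_sym[OF assms(1)])
next
  fix v :: "real^'t"
  obtain w where w: "v \<bullet> (post_cov s (P ** H) (Q ** H) *v v) = (transpose (Q ** H) *v v - transpose (P ** H) *v w) \<bullet> (transpose (Q ** H) *v v - transpose (P ** H) *v w) + s * (w \<bullet> w)"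
    using post_cov_eq[OF assms(1)] by blast
  define u where "u = transpose Q *v v - transpose P *v w"
  have "transpose (Q ** H) *v v - transpose (P ** H) *v w = transpose H *v u"
    unfolding u_def matrix_transpose_mul matrix_vector_mult_diff_distrib
    by (simp only: matrix_vector_mul_assoc)
  then have "(transpose (Q ** H) *v v - transpose (P ** H) *v w) \<bullet> (transpose (Q ** H) *v v - transpose (P ** H) *v w) = u \<bullet> ((H ** transpose H) *v u)"
    by (metis inner_mv matrix_vector_mul_assoc)
  then have "v \<bullet> (post_cov s (P ** H) (Q ** H) *v v) \<ge> u \<bullet> u + s * (w \<bullet> w)"
    using w M[of u] by simp
  moreover have "v \<bullet> (post_cov s P Q *v v) \<le> u \<bullet> u + s * (w \<bullet> w)"
    unfolding u_def by (rule post_cov_le[OF assms(1)])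
  ultimately show "0 \<le> v \<bullet> ((post_cov s (P ** H) (Q ** H) - post_cov s P Q) *v v)"
    by (simp add: matrix_vector_mult_diff_rdistrib inner_diff_right)
qed

lemma stack_ge:
  fixes A :: "real^'r^'m" and u :: "real^'r"
  shows "u \<bullet> u \<le> u \<bullet> ((transpose (stack_identity A) ** stack_identity A) *v u)"
proof -
  let ?B = "stack_identity A"
  have e: "u \<bullet> ((transpose ?B ** ?B) *v u) = (?B *v u) \<bullet> (?B *v u)"
    by (metis inner_mv matrix_vector_mul_assoc transpose_transpose inner_commute)
  have c: "(?B *v u) $ Inr b = u $ b" for b
  proof -
    have "(?B *v u) $ Inr b = (?B $ Inr b) \<bullet> u" by (rule matrix_vector_mul_component)
    also have "\<dots> = (mat 1 :: real^'r^'r) $ b \<bullet> u" by (simp add: stack_identity_def)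
    also have "\<dots> = ((mat 1 :: real^'r^'r) *v u) $ b" by (rule matrix_vector_mul_component[symmetric])
    finally show ?thesis by simp
  qed
  have "u \<bullet> u = (\<Sum>b\<in>UNIV. (?B *v u) $ Inr b * (?B *v u) $ Inr b)"
    by (simp add: inner_vec_def c)
  also have "\<dots> = (\<Sum>i\<in>range Inr. (?B *v u) $ i * (?B *v u) $ i)"
    by (simp add: sum.reindex)
  also have "\<dots> \<le> (\<Sum>i\<in>UNIV. (?B *v u) $ i * (?B *v u) $ i)"
    by (rule sum_mono2) auto
  also have "\<dots> = (?B *v u) \<bullet> (?B *v u)" by (simp add: inner_vec_def)
  finally show ?thesis using e by simp
qed



theorem theorem3p3:
  fixes \<sigma>2 :: real
    and \<phi>m :: "real^'d \<Rightarrow> real^'m"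
    and \<phi>r :: "real^'d \<Rightarrow> real^'r"
    and xs :: "'n::finite \<Rightarrow> real^'d"
    and xt :: "'t::finite \<Rightarrow> real^'d"
  assumes "\<sigma>2 > 0"
    and "CARD('n) \<ge> CARD('r)"
    and "invertible (transpose (feature_matrix \<phi>r xs) ** feature_matrix \<phi>r xs)"
  shows "loewner_ge
           (post_cov \<sigma>2
              (feature_matrix \<phi>r xs ** transpose (stack_identity (ls_matrix (feature_matrix \<phi>m xs) (feature_matrix \<phi>r xs))))
              (feature_matrix \<phi>r xt ** transpose (stack_identity (ls_matrix (feature_matrix \<phi>m xs) (feature_matrix \<phi>r xs)))))
           (post_cov \<sigma>2 (feature_matrix \<phi>r xs) (feature_matrix \<phi>r xt))
       \<and> (\<forall>L :: real^'r^'r.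
            L ** transpose L =
              transpose (stack_identity (ls_matrix (feature_matrix \<phi>m xs) (feature_matrix \<phi>r xs)))
              ** stack_identity (ls_matrix (feature_matrix \<phi>m xs) (feature_matrix \<phi>r xs))
            \<longrightarrow> loewner_ge
                  (post_cov \<sigma>2 (feature_matrix \<phi>r xs ** L) (feature_matrix \<phi>r xt ** L))
                  (post_cov \<sigma>2 (feature_matrix \<phi>r xs) (feature_matrix \<phi>r xt)))"
  proof -
  let ?B = "stack_identity (ls_matrix (feature_matrix \<phi>m xs) (feature_matrix \<phi>r xs))"
  have M: "\<And>u. u \<bullet> u \<le> u \<bullet> ((transpose ?B ** ?B) *v u)" by (rule stack_ge)
  have 1: "loewner_ge (post_cov \<sigma>2 (feature_matrix \<phi>r xs ** transpose ?B) (feature_matrix \<phi>r xt ** transpose ?B))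
           (post_cov \<sigma>2 (feature_matrix \<phi>r xs) (feature_matrix \<phi>r xt))"
    by (rule main_gen[OF assms(1)]) (simp add: M)
  have 2: "loewner_ge (post_cov \<sigma>2 (feature_matrix \<phi>r xs ** L) (feature_matrix \<phi>r xt ** L))
                  (post_cov \<sigma>2 (feature_matrix \<phi>r xs) (feature_matrix \<phi>r xt))"
    if "L ** transpose L = transpose ?B ** ?B" for L :: "real^'r^'r"
    by (rule main_gen[OF assms(1)]) (simp add: M that)
  show ?thesis using 1 2 by blast
qed

end
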